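(* Let $U\subset\mathbb{R}^m$ be open with coordinates $q=(q^a,q^\alpha)$, $1\le a\le m-n$, $1\le\alpha\le n$; let $g=(g_{ij})$ be a Riemannian metric on $U$, $V\colon U\to\mathbb{R}$ smooth, $\Gamma^\alpha_a\colon U\to\mathbb{R}$ smooth, and $h>0$. Define $$\mathbb{L}_d(q_0,q_1)=\frac{1}{2h}g_{ij}(q_0)(q_1^i-q_0^i)(q_1^j-q_0^j)-hV(q_0),$$ $$C_d=\{(q_0,q_1)\in U\times U:\ q_1^\alpha-q_0^\alpha=\Gamma^\alpha_a(q_0)(q_1^a-q_0^a),\ 1\le\alpha\le n\},$$ and $L_d=\mathbb{L}_d|_{C_d}$. Let $\gamma_{ab}=g_{ab}+g_{a\alpha}\Gamma^\alpha_b+g_{b\alpha}\Gamma^\alpha_a+g_{\alpha\beta}\Gamma^\alpha_a\Gamma^\beta_b$, $(\gamma^{ab})$ its inverse matrix, and define $H\colon T^*U\to\mathbb{R}$ by $H(q,p)=\frac12\gamma^{ab}(q)P_aP_b+V(q)$ with $P_a=p_a+p_\alpha\Gamma^\alpha_a(q)$. Then the set $\Upsilon(\Sigma_{L_d})\subset T^*U\times T^*U$ coincides with the set of $(q_0,p_0,q_1,p_1)$ satisfying the symplectic Euler scheme $$p_1=p_0-h\frac{\partial H}{\partial q}(q_0,p_1),\qquad q_1=q_0+h\frac{\partial H}{\partial p}(q_0,p_1).$$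
   Context: $\gamma_{ab}$ is invertible since $g$ is Riemannian. For a submanifold $N\subset Q$ and $f\colon N\to\mathbb{R}$, $\Sigma_f=\{\mu\in T^*Q:\ \pi_Q(\mu)\in N,\ \langle\mu,v\rangle=\langle df,v\rangle\ \forall v\in T_{\pi_Q(\mu)}N\}$; $\Sigma_{L_d}\subset T^*(U\times U)$ is this set for $Q=U\times U$, $N=C_d$, $f=L_d$. Concretely, with constraint functions $\phi^\alpha_d(q_0,q_1)=q_1^\alpha-q_0^\alpha-\Gamma^\alpha_a(q_0)(q_1^a-q_0^a)$, $\Sigma_{L_d}$ consists of covectors $(\mu_0,\mu_1)$ at points of $C_d$ with $\mu_0=\partial_{q_0}\mathbb{L}_d+\lambda_\alpha\partial_{q_0}\phi^\alpha_d$, $\mu_1=\partial_{q_1}\mathbb{L}_d+\lambda_\alpha\partial_{q_1}\phi^\alpha_d$ for some multipliers $\lambda_\alpha$. $\Upsilon\colon T^*(U\times U)\to T^*U\times T^*U$ is $\Upsilon(\gamma_{q_0},\gamma_{q_1})=(-\gamma_{q_0},\gamma_{q_1})$ under $T^*_{(q_0,q_1)}(U\times U)\cong T^*_{q_0}U\times T^*_{q_1}U$; points of $T^*U\times T^*U$ are written $(q_0,p_0,q_1,p_1)$. *)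

theory Defs
  imports "HOL-Analysis.Analysis"
begin

text \<open>Coordinates on R^m are indexed by the sum type 'k + 'n:
  index Inl a is the coordinate q^a (1 <= a <= m-n), index Inr alpha is q^alpha (1 <= alpha <= n).
  Covectors in a cotangent fibre are represented by their component vectors p = (p_i).\<close>

fun Ck :: "nat \<Rightarrow> ('a::real_normed_vector) set \<Rightarrow> ('a \<Rightarrow> real) \<Rightarrow> bool" where
  "Ck 0 S f = continuous_on S f"
| "Ck (Suc k) S f = (f differentiable_on S \<and> (\<forall>v. Ck k S (\<lambda>x. frechet_derivative f (at x) v)))"

definition smooth_on :: "('a::real_normed_vector) set \<Rightarrow> ('a \<Rightarrow> real) \<Rightarrow> bool" where
  "smooth_on S f \<longleftrightarrow> (\<forall>k. Ck k S f)"

definition grad :: "(real^'i \<Rightarrow> real) \<Rightarrow> real^'i \<Rightarrow> real^'i" where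
  "grad f x = (\<chi> i. frechet_derivative f (at x) (axis i 1))"

definition riemannian_metric :: "(real^'i) set \<Rightarrow> (real^'i \<Rightarrow> real^'i^'i) \<Rightarrow> bool" where
  "riemannian_metric U g \<longleftrightarrow>
     (\<forall>i j. smooth_on U (\<lambda>q. g q $ i $ j)) \<and>
     (\<forall>q\<in>U. transpose (g q) = g q \<and> (\<forall>v. v \<noteq> 0 \<longrightarrow> v \<bullet> (g q *v v) > 0))"

definition LLd :: "real \<Rightarrow> (real^'i \<Rightarrow> real^'i^'i) \<Rightarrow> (real^'i \<Rightarrow> real)
                   \<Rightarrow> real^'i \<Rightarrow> real^'i \<Rightarrow> real" where
  "LLd h g V q0 q1 =
     (1 / (2*h)) * (\<Sum>i\<in>UNIV. \<Sum>j\<in>UNIV. g q0 $ i $ j * (q1 $ i - q0 $ i) * (q1 $ j - q0 $ j))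
     - h * V q0"

text \<open>Constraint functions phi^alpha_d(q0,q1) = q1^alpha - q0^alpha - Gamma^alpha_a(q0)(q1^a - q0^a);
  Gamma q alpha a is Gamma^alpha_a(q).\<close>
definition phid :: "(real^('k::finite+'n::finite) \<Rightarrow> 'n \<Rightarrow> 'k \<Rightarrow> real) \<Rightarrow> 'n
                    \<Rightarrow> real^('k+'n) \<Rightarrow> real^('k+'n) \<Rightarrow> real" where
  "phid \<Gamma> \<alpha> q0 q1 = q1 $ Inr \<alpha> - q0 $ Inr \<alpha>
     - (\<Sum>a\<in>UNIV. \<Gamma> q0 \<alpha> a * (q1 $ Inl a - q0 $ Inl a))"

definition Cd :: "(real^('k::finite+'n::finite)) set \<Rightarrow> (real^('k+'n) \<Rightarrow> 'n \<Rightarrow> 'k \<Rightarrow> real)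
                  \<Rightarrow> ((real^('k+'n)) \<times> (real^('k+'n))) set" where
  "Cd U \<Gamma> = {(q0, q1). q0 \<in> U \<and> q1 \<in> U \<and> (\<forall>\<alpha>. phid \<Gamma> \<alpha> q0 q1 = 0)}"

definition d0 :: "(real^'i \<Rightarrow> real^'i \<Rightarrow> real) \<Rightarrow> real^'i \<Rightarrow> real^'i \<Rightarrow> real^'i" where
  "d0 F q0 q1 = grad (\<lambda>q. F q q1) q0"
definition d1 :: "(real^'i \<Rightarrow> real^'i \<Rightarrow> real) \<Rightarrow> real^'i \<Rightarrow> real^'i \<Rightarrow> real^'i" where
  "d1 F q0 q1 = grad (\<lambda>q. F q0 q) q1"

definition SigmaLd :: "(real^('k::finite+'n::finite)) set \<Rightarrow> real \<Rightarrow> (real^('k+'n) \<Rightarrow> real^('k+'n)^('k+'n))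
     \<Rightarrow> (real^('k+'n) \<Rightarrow> real) \<Rightarrow> (real^('k+'n) \<Rightarrow> 'n \<Rightarrow> 'k \<Rightarrow> real)
     \<Rightarrow> (((real^('k+'n)) \<times> (real^('k+'n))) \<times> ((real^('k+'n)) \<times> (real^('k+'n)))) set" where
  "SigmaLd U h g V \<Gamma> = {((q0, q1), (\<mu>0, \<mu>1)). (q0, q1) \<in> Cd U \<Gamma> \<and>
     (\<exists>lam :: 'n \<Rightarrow> real.
        \<mu>0 = d0 (LLd h g V) q0 q1 + (\<Sum>\<alpha>\<in>UNIV. lam \<alpha> *\<^sub>R d0 (phid \<Gamma> \<alpha>) q0 q1) \<and>
        \<mu>1 = d1 (LLd h g V) q0 q1 + (\<Sum>\<alpha>\<in>UNIV. lam \<alpha> *\<^sub>R d1 (phid \<Gamma> \<alpha>) q0 q1))}"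

definition Upsilon :: "('a \<times> 'a) \<times> (('b::uminus) \<times> 'b) \<Rightarrow> 'a \<times> 'b \<times> 'a \<times> 'b" where
  "Upsilon x = (case x of ((q0, q1), (\<mu>0, \<mu>1)) \<Rightarrow> (q0, - \<mu>0, q1, \<mu>1))"

definition gammaM :: "(real^('k::finite+'n::finite) \<Rightarrow> real^('k+'n)^('k+'n)) \<Rightarrow> (real^('k+'n) \<Rightarrow> 'n \<Rightarrow> 'k \<Rightarrow> real)
                      \<Rightarrow> real^('k+'n) \<Rightarrow> real^'k^'k" where
  "gammaM g \<Gamma> q = (\<chi> a b. g q $ Inl a $ Inl b
      + (\<Sum>\<alpha>\<in>UNIV. g q $ Inl a $ Inr \<alpha> * \<Gamma> q \<alpha> b)
      + (\<Sum>\<alpha>\<in>UNIV. g q $ Inl b $ Inr \<alpha> * \<Gamma> q \<alpha> a)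
      + (\<Sum>\<alpha>\<in>UNIV. \<Sum>\<beta>\<in>UNIV. g q $ Inr \<alpha> $ Inr \<beta> * \<Gamma> q \<alpha> a * \<Gamma> q \<beta> b))"

definition Pmom :: "(real^('k::finite+'n::finite) \<Rightarrow> 'n \<Rightarrow> 'k \<Rightarrow> real) \<Rightarrow> real^('k+'n) \<Rightarrow> real^('k+'n) \<Rightarrow> 'k \<Rightarrow> real" where
  "Pmom \<Gamma> q p a = p $ Inl a + (\<Sum>\<alpha>\<in>UNIV. p $ Inr \<alpha> * \<Gamma> q \<alpha> a)"

definition Ham :: "(real^('k::finite+'n::finite) \<Rightarrow> real^('k+'n)^('k+'n)) \<Rightarrow> (real^('k+'n) \<Rightarrow> real)
                   \<Rightarrow> (real^('k+'n) \<Rightarrow> 'n \<Rightarrow> 'k \<Rightarrow> real) \<Rightarrow> real^('k+'n) \<Rightarrow> real^('k+'n) \<Rightarrow> real" where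
  "Ham g V \<Gamma> q p = (1/2) * (\<Sum>a\<in>UNIV. \<Sum>b\<in>UNIV.
       matrix_inv (gammaM g \<Gamma> q) $ a $ b * Pmom \<Gamma> q p a * Pmom \<Gamma> q p b) + V q"

end

theory Submission
  imports Defs
begin

lemma grad_eq:
  assumes "(f has_derivative F) (at x)"
  shows "grad f x = (\<chi> i. F (axis i 1))"
  by (simp add: grad_def frechet_derivative_at[OF assms, symmetric])

lemma smooth_differentiable:
  assumes "smooth_on U f" "open U" "x \<in> U"
  shows "f differentiable (at x)"
proof -
  have "Ck (Suc 0) U f" using assms(1) unfolding smooth_on_def by blast
  then have "f differentiable_on U" by simp
  then show ?thesis using assms differentiable_on_eq_differentiable_at by blast
qed

lemma differentiable_prod':
  fixes f :: "'i \<Rightarrow> 'a::real_normed_vector \<Rightarrow> real"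
  assumes "finite A" "\<forall>i\<in>A. f i differentiable (at x)"
  shows "(\<lambda>q. \<Prod>i\<in>A. f i q) differentiable (at x)"
  using assms
proof (induction A rule: finite_induct)
  case empty then show ?case by simp
next
  case (insert a A)
  then show ?case by (simp add: differentiable_mult)
qed

lemma det_differentiable:
  fixes A :: "'a::real_normed_vector \<Rightarrow> real^'n^'n"
  assumes "\<And>i j. (\<lambda>q. A q $ i $ j) differentiable (at x)"
  shows "(\<lambda>q. det (A q)) differentiable (at x)"
  unfolding det_def
  by (intro differentiable_sum ballI differentiable_mult differentiable_const
        differentiable_prod' finite_permutations finite) (simp_all add: assms)

lemma matrix_inv_props:
  assumes "invertible (A::real^'n^'n)"
  shows "A ** matrix_inv A = mat 1" "matrix_inv A ** A = mat 1"
proof -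
  have "\<exists>A'. A ** A' = mat 1 \<and> A' ** A = mat 1" using assms invertible_def by blast
  then have "A ** matrix_inv A = mat 1 \<and> matrix_inv A ** A = mat 1"
    unfolding matrix_inv_def by (rule someI_ex)
  then show "A ** matrix_inv A = mat 1" "matrix_inv A ** A = mat 1" by auto
qed

lemma matrix_inv_entry:
  assumes "invertible (A::real^'n^'n)"
  shows "matrix_inv A $ a $ b = det (\<chi> i j. if j = a then axis b 1 $ i else A$i$j) / det A"
proof -
  have d: "det A \<noteq> 0" using assms invertible_det_nz by blast
  have "A *v (matrix_inv A *v axis b 1) = axis b 1"
    by (simp add: matrix_vector_mul_assoc matrix_inv_props(1)[OF assms])
  then have "matrix_inv A *v axis b 1 = (\<chi> k. det(\<chi> i j. if j=k then axis b 1 $i else A$i$j) / det A)"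
    using cramer[OF d] by blast
  then have "(matrix_inv A *v axis b 1) $ a = det (\<chi> i j. if j = a then axis b 1 $ i else A$i$j) / det A"
    by simp
  then show ?thesis by (simp add: matrix_vector_mult_basis column_def)
qed

definition Tm :: "(real^('k::finite+'n::finite) \<Rightarrow> 'n \<Rightarrow> 'k \<Rightarrow> real) \<Rightarrow> real^('k+'n) \<Rightarrow> real^'k \<Rightarrow> real^('k+'n)" where
  "Tm \<Gamma> q x = (\<chi> i. case i of Inl a \<Rightarrow> x$a | Inr \<alpha> \<Rightarrow> (\<Sum>a\<in>UNIV. \<Gamma> q \<alpha> a * x$a))"
definition Dk :: "real^('k::finite+'n::finite) \<Rightarrow> real^'k" where
  "Dk y = (\<chi> a. y $ Inl a)"
definition Pm :: "(real^('k::finite+'n::finite) \<Rightarrow> 'n \<Rightarrow> 'k \<Rightarrow> real) \<Rightarrow> real^('k+'n) \<Rightarrow> real^('k+'n) \<Rightarrow> real^'k" where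
  "Pm \<Gamma> q p = (\<chi> a. Pmom \<Gamma> q p a)"

lemma sum_plus_univ:
  "(\<Sum>i\<in>(UNIV::('k::finite+'n::finite) set). f i) = (\<Sum>a\<in>UNIV. f (Inl a)) + (\<Sum>\<alpha>\<in>UNIV. f (Inr \<alpha>))"
proof -
  have "(\<Sum>i\<in>(UNIV::('k+'n) set). f i) = (\<Sum>i\<in>(UNIV <+> UNIV). f i)" by simp
  also have "\<dots> = (\<Sum>a\<in>UNIV. f (Inl a)) + (\<Sum>\<alpha>\<in>UNIV. f (Inr \<alpha>))"
    by (subst sum.Plus) (simp_all add: o_def)
  finally show ?thesis .
qed

lemma inner_plus:
  fixes x y :: "real^('k::finite+'n::finite)"
  shows "x \<bullet> y = (\<Sum>a\<in>UNIV. x$Inl a * y$Inl a) + (\<Sum>\<alpha>\<in>UNIV. x$Inr \<alpha> * y$Inr \<alpha>)"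
  by (simp add: inner_vec_def sum_plus_univ)

lemma Tm_Inl [simp]: "Tm \<Gamma> q x $ Inl a = x $ a" by (simp add: Tm_def)
lemma Tm_Inr [simp]: "Tm \<Gamma> q x $ Inr \<alpha> = (\<Sum>a\<in>UNIV. \<Gamma> q \<alpha> a * x$a)" by (simp add: Tm_def)
lemma Dk_nth [simp]: "Dk y $ a = y $ Inl a" by (simp add: Dk_def)
lemma Pm_nth [simp]: "Pm \<Gamma> q p $ a = p $ Inl a + (\<Sum>\<alpha>\<in>UNIV. p $ Inr \<alpha> * \<Gamma> q \<alpha> a)"
  by (simp add: Pm_def Pmom_def)

lemma Tm_add: "Tm \<Gamma> q (x + y) = Tm \<Gamma> q x + Tm \<Gamma> q y"
  by (simp add: vec_eq_iff Tm_def distrib_left sum.distrib split: sum.split)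
lemma Tm_diff: "Tm \<Gamma> q (x - y) = Tm \<Gamma> q x - Tm \<Gamma> q y"
  by (simp add: vec_eq_iff Tm_def right_diff_distrib sum_subtractf split: sum.split)
lemma Tm_scale: "Tm \<Gamma> q (c *\<^sub>R x) = c *\<^sub>R Tm \<Gamma> q x"
  by (simp add: vec_eq_iff Tm_def sum_distrib_left algebra_simps split: sum.split)
lemma Dk_diff: "Dk (x - y) = Dk x - Dk y" by (simp add: vec_eq_iff)
lemma Dk_Tm [simp]: "Dk (Tm \<Gamma> q x) = x" by (simp add: vec_eq_iff)

lemma Pm_Tm: "Pm \<Gamma> q p \<bullet> x = p \<bullet> Tm \<Gamma> q x"
  apply (simp add: inner_plus inner_vec_def)
  apply (simp add: algebra_simps sum.distrib sum_distrib_left sum_distrib_right)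
  apply (subst sum.swap)
  apply simp
  done

lemma bilin_sum: "(\<Sum>i\<in>UNIV. \<Sum>j\<in>UNIV. G$i$j * x$i * y$j) = x \<bullet> ((G::real^'i^'i) *v y)"
  by (simp add: inner_vec_def matrix_vector_mult_def sum_distrib_left algebra_simps)

lemma sym_inner: "transpose G = G \<Longrightarrow> x \<bullet> ((G::real^'i^'i) *v y) = y \<bullet> (G *v x)"
  by (metis dot_lmul_matrix inner_commute transpose_matrix_vector)

lemma gammaM_mult:
  assumes "transpose (g q) = g q"
  shows "gammaM g \<Gamma> q *v x = Pm \<Gamma> q (g q *v Tm \<Gamma> q x)"
proof -
  have s: "g q $ i $ j = g q $ j $ i" for i j using arg_cong[OF assms, of "\<lambda>A. A$j$i"] by (simp add: transpose_def)
  show ?thesis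
    apply (simp add: vec_eq_iff gammaM_def matrix_vector_mult_def sum_plus_univ)
    apply (simp add: sum_distrib_left sum_distrib_right sum.distrib algebra_simps)
    apply (simp add: s)
    apply (rule allI)
    subgoal for i
    proof -
      have e1: "(\<Sum>j\<in>UNIV. \<Sum>n\<in>UNIV. x $ j * (\<Gamma> q n i * g q $ Inl j $ Inr n)) =
         (\<Sum>\<alpha>\<in>UNIV. \<Sum>n\<in>UNIV. x $ n * (\<Gamma> q \<alpha> i * g q $ Inl n $ Inr \<alpha>))"
        by (rule sum.swap)
      have e2: "(\<Sum>j\<in>UNIV. \<Sum>n\<in>UNIV. x $ j * (\<Gamma> q n j * g q $ Inl i $ Inr n)) =
         (\<Sum>\<alpha>\<in>UNIV. \<Sum>n\<in>UNIV. x $ n * (\<Gamma> q \<alpha> n * g q $ Inl i $ Inr \<alpha>))"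
        by (rule sum.swap)
      have e3: "(\<Sum>j\<in>UNIV. \<Sum>n\<in>UNIV. \<Sum>na\<in>UNIV.
                 x $ j * (\<Gamma> q n i * (\<Gamma> q na j * g q $ Inr n $ Inr na))) =
         (\<Sum>\<alpha>\<in>UNIV. \<Sum>n\<in>UNIV. \<Sum>na\<in>UNIV.
                 x $ na * (\<Gamma> q \<alpha> i * (\<Gamma> q n na * g q $ Inr \<alpha> $ Inr n)))"
        apply (rule trans[OF sum.swap])
        apply (rule sum.cong[OF refl])
        apply (rule sum.swap)
        done
      show ?thesis by (simp only: e1 e2 e3 add.commute add.left_commute)
    qed
    done
qed

lemma entry_inner: "(A::real^'n^'m) $ i $ j = axis i 1 \<bullet> (A *v axis j 1)"
  by (metis cart_eq_inner_axis column_def inner_commute matrix_vector_mult_basis vec_lambda_beta)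

lemma transpose_from_sym:
  assumes "\<And>x y. x \<bullet> ((A::real^'n^'n) *v y) = y \<bullet> (A *v x)"
  shows "transpose A = A"
  by (simp add: vec_eq_iff transpose_def entry_inner[of A] assms)

lemma gammaM_inner:
  assumes "transpose (g q) = g q"
  shows "x \<bullet> (gammaM g \<Gamma> q *v y) = Tm \<Gamma> q x \<bullet> (g q *v Tm \<Gamma> q y)"
  by (metis gammaM_mult[where g=g and q=q, OF assms] inner_commute Pm_Tm)

lemma gammaM_sym:
  assumes "transpose (g q) = g q"
  shows "transpose (gammaM g \<Gamma> q) = gammaM g \<Gamma> q"
  by (rule transpose_from_sym) (simp add: gammaM_inner[where g=g and q=q, OF assms] sym_inner[OF assms])

lemma gammaM_invertible:
  assumes "transpose (g q) = g q" "\<And>v. v \<noteq> 0 \<Longrightarrow> v \<bullet> (g q *v v) > 0"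
  shows "invertible (gammaM g \<Gamma> q)"
proof -
  have "x = 0" if "gammaM g \<Gamma> q *v x = 0" for x
  proof (rule ccontr)
    assume "x \<noteq> 0"
    have "Tm \<Gamma> q x \<noteq> 0"
    proof
      assume h0: "Tm \<Gamma> q x = 0"
      have "x = Dk (Tm \<Gamma> q x)" by simp
      also have "\<dots> = 0" by (simp add: h0 vec_eq_iff)
      finally show False using \<open>x \<noteq> 0\<close> by simp
    qed
    then have "Tm \<Gamma> q x \<bullet> (g q *v Tm \<Gamma> q x) > 0" using assms(2) by blast
    then show False using that gammaM_inner[where g=g and q=q and x=x and y=x and \<Gamma>=\<Gamma>, OF assms(1)] by simp
  qed
  then show ?thesis
    using invertible_left_inverse matrix_left_invertible_ker by blast
qed

lemma inv_sym:
  assumes "invertible (A::real^'n^'n)" "transpose A = A"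
  shows "transpose (matrix_inv A) = matrix_inv A"
proof -
  let ?N = "matrix_inv A"
  have "transpose (A ** ?N) = mat 1" using matrix_inv_props(1)[OF assms(1)] by simp
  then have 1: "transpose ?N ** A = mat 1" using assms(2) by (simp add: matrix_transpose_mul)
  have "transpose ?N = transpose ?N ** (A ** ?N)" by (simp add: matrix_inv_props(1)[OF assms(1)])
  also have "\<dots> = (transpose ?N ** A) ** ?N" by (simp add: matrix_mul_assoc)
  also have "\<dots> = ?N" by (simp add: 1)
  finally show ?thesis .
qed

lemma hd_nth [derivative_intros]: "((\<lambda>q. q $ i) has_derivative (\<lambda>v. v $ i)) F"
  by (rule bounded_linear_imp_has_derivative[OF bounded_linear_vec_nth])

lemma diff_nth [derivative_intros]: "(\<lambda>q. q $ i) differentiable F"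
  using hd_nth differentiable_def by blast

lemma has_derivative_prod0:
  fixes f k :: "'a::real_normed_vector \<Rightarrow> real"
  assumes "(f has_derivative f') (at x)" "k differentiable (at x)" "f x = 0"
  shows "((\<lambda>q. f q * k q) has_derivative (\<lambda>v. f' v * k x)) (at x)"
proof -
  obtain k' where k: "(k has_derivative k') (at x)" using assms(2) differentiable_def by blast
  have "((\<lambda>q. f q * k q) has_derivative (\<lambda>v. f x * k' v + f' v * k x)) (at x)"
    by (rule has_derivative_mult[OF assms(1) k])
  then show ?thesis using assms(3) by simp
qed

lemma has_derivative_prod00:
  fixes f k :: "'a::real_normed_vector \<Rightarrow> real"
  assumes "f differentiable (at x)" "k differentiable (at x)" "f x = 0" "k x = 0"
  shows "((\<lambda>q. f q * k q) has_derivative (\<lambda>v. 0)) (at x)"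
proof -
  obtain f' where f: "(f has_derivative f') (at x)" using assms(1) differentiable_def by blast
  show ?thesis using has_derivative_prod0[OF f assms(2,3)] assms(4) by simp
qed

lemma differentiable_transform_open:
  assumes "f differentiable (at x)" "open S" "x \<in> S" "\<And>y. y \<in> S \<Longrightarrow> f y = g y"
  shows "g differentiable (at x)"
  using assms has_derivative_transform_within_open differentiable_def by metis

locale mset =
  fixes U :: "(real^('k::finite + 'n::finite)) set"
    and g :: "real^('k + 'n) \<Rightarrow> real^('k + 'n)^('k + 'n)"
    and V :: "real^('k + 'n) \<Rightarrow> real"
    and \<Gamma> :: "real^('k + 'n) \<Rightarrow> 'n \<Rightarrow> 'k \<Rightarrow> real"
    and h :: real and q0 :: "real^('k + 'n)"
  assumes oU: "open U" and q0U: "q0 \<in> U" and rg: "riemannian_metric U g"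
    and sV: "smooth_on U V" and s\<Gamma>: "\<And>\<alpha> a. smooth_on U (\<lambda>q. \<Gamma> q \<alpha> a)" and hpos: "h > 0"
begin

lemma gsym: "q \<in> U \<Longrightarrow> transpose (g q) = g q"
  using rg unfolding riemannian_metric_def by blast
lemma gpos: "q \<in> U \<Longrightarrow> v \<noteq> 0 \<Longrightarrow> v \<bullet> (g q *v v) > 0"
  using rg unfolding riemannian_metric_def by blast
lemma Minv: "q \<in> U \<Longrightarrow> invertible (gammaM g \<Gamma> q)"
  by (rule gammaM_invertible) (auto intro: gsym gpos)
lemma Nsym: "q \<in> U \<Longrightarrow> transpose (matrix_inv (gammaM g \<Gamma> q)) = matrix_inv (gammaM g \<Gamma> q)"
  by (rule inv_sym[OF Minv gammaM_sym[OF gsym]])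

lemma dg [derivative_intros]: "(\<lambda>q. g q $ i $ j) differentiable (at q0)"
  using rg oU q0U smooth_differentiable unfolding riemannian_metric_def by blast
lemma dV [derivative_intros]: "V differentiable (at q0)"
  using sV oU q0U smooth_differentiable by blast
lemma dG [derivative_intros]: "(\<lambda>q. \<Gamma> q \<alpha> a) differentiable (at q0)"
  using s\<Gamma> oU q0U smooth_differentiable by blast

lemma dTm [derivative_intros]: "(\<lambda>q. Tm \<Gamma> q x $ j) differentiable (at q0)"
  by (cases j) (auto intro!: derivative_intros)

lemma dM [derivative_intros]: "(\<lambda>q. gammaM g \<Gamma> q $ a $ b) differentiable (at q0)"
  unfolding gammaM_def by (auto intro!: derivative_intros)

lemma dN [derivative_intros]: "(\<lambda>q. matrix_inv (gammaM g \<Gamma> q) $ a $ b) differentiable (at q0)"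
proof -
  let ?E = "\<lambda>q. det (\<chi> i j. if j = a then axis b 1 $ i else gammaM g \<Gamma> q $i$j) / det (gammaM g \<Gamma> q)"
  have h1: "(\<lambda>q. (\<chi> i j. if j = a then axis b 1 $ i else gammaM g \<Gamma> q $i$j) $ i $ j) differentiable (at q0)" for i j
    by (cases "j = a") (auto intro!: derivative_intros)
  have h2: "det (gammaM g \<Gamma> q0) \<noteq> 0" using Minv[OF q0U] invertible_det_nz by blast
  have "?E differentiable (at q0)"
    by (intro differentiable_divide det_differentiable h1 h2 dM)
  then show ?thesis
    by (rule differentiable_transform_open[OF _ oU q0U]) (simp add: matrix_inv_entry[OF Minv])
qed

lemma dLLd: "(\<lambda>q. LLd h g V q q1) differentiable (at q0)"
  unfolding LLd_def using hpos by (auto intro!: derivative_intros)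
lemma dphid: "(\<lambda>q. phid \<Gamma> \<alpha> q q1) differentiable (at q0)"
  unfolding phid_def by (auto intro!: derivative_intros)
lemma dHam: "(\<lambda>q. Ham g V \<Gamma> q p) differentiable (at q0)"
  unfolding Ham_def Pmom_def by (auto intro!: derivative_intros)

end

definition lamv :: "('n::finite \<Rightarrow> real) \<Rightarrow> real^('k::finite+'n)" where
  "lamv lam = (\<chi> i. case i of Inl a \<Rightarrow> 0 | Inr \<alpha> \<Rightarrow> lam \<alpha>)"

lemma lamv_Inl [simp]: "lamv lam $ Inl a = 0" by (simp add: lamv_def)
lemma lamv_Inr [simp]: "lamv lam $ Inr \<alpha> = lam \<alpha>" by (simp add: lamv_def)

lemma Ham_inner: "Ham g V \<Gamma> q p = (1/2) * (Pm \<Gamma> q p \<bullet> (matrix_inv (gammaM g \<Gamma> q) *v Pm \<Gamma> q p)) + V q"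
  unfolding Ham_def bilin_sum[symmetric] by (simp del: Pm_nth add: Pm_def)

lemma LLd_inner: "LLd h g V q q1 = (1/(2*h)) * ((q1 - q) \<bullet> (g q *v (q1 - q))) - h * V q"
  unfolding LLd_def bilin_sum[symmetric] by simp

lemma phid_sum: "(\<Sum>\<alpha>\<in>UNIV. lam \<alpha> * phid \<Gamma> \<alpha> q q1) = lamv lam \<bullet> ((q1 - q) - Tm \<Gamma> q (Dk (q1 - q)))"
  by (simp add: inner_plus phid_def)

lemma quad_inv:
  assumes "transpose N = N" "N ** M = (mat 1::real^'k^'k)" "transpose M = M"
  shows "P \<bullet> (N *v P) = 2 * (P \<bullet> u) - u \<bullet> (M *v u) + (M *v u - P) \<bullet> (N *v (M *v u - P))"
proof -
  have NM: "N *v (M *v u) = u" by (simp add: matrix_vector_mul_assoc assms(2))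
  have s1: "(M *v u) \<bullet> (N *v P) = P \<bullet> u" using sym_inner[OF assms(1), of "M *v u" P] NM by simp
  have s2: "(M *v u) \<bullet> u = u \<bullet> (M *v u)" by (simp add: inner_commute)
  show ?thesis
    by (simp add: algebra_simps inner_diff_left inner_diff_right NM s1 s2)
qed

lemma hd_cm: "((\<lambda>q. c - q $ i) has_derivative (\<lambda>v. - v $ i)) F"
proof -
  have "((\<lambda>q. c - q $ i) has_derivative (\<lambda>v. 0 - v $ i)) F" by (intro derivative_intros)
  then show ?thesis by simp
qed
lemma hd_mc: "((\<lambda>q. q $ i - c) has_derivative (\<lambda>v. v $ i)) F"
proof -
  have "((\<lambda>q. q $ i - c) has_derivative (\<lambda>v. v $ i - 0)) F" by (intro derivative_intros)
  then show ?thesis by simp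
qed

context mset begin

lemma Msym: "q \<in> U \<Longrightarrow> transpose (gammaM g \<Gamma> q) = gammaM g \<Gamma> q"
  using gammaM_sym[where g=g and q=q] gsym by blast

lemma Minner: "q \<in> U \<Longrightarrow> x \<bullet> (gammaM g \<Gamma> q *v y) = Tm \<Gamma> q x \<bullet> (g q *v Tm \<Gamma> q y)"
  using gammaM_inner[where g=g and q=q] gsym by blast

lemma Mmult: "q \<in> U \<Longrightarrow> gammaM g \<Gamma> q *v x = Pm \<Gamma> q (g q *v Tm \<Gamma> q x)"
  using gammaM_mult[where g=g and q=q] gsym by blast

lemma S_identity:
  fixes q1 p1 :: "real^('k+'n)" and lam :: "'n \<Rightarrow> real"
  assumes qU: "q \<in> U"
  defines "Dl \<equiv> Dk (q1 - q0)"
  shows "LLd h g V q q1 + (\<Sum>\<alpha>\<in>UNIV. lam \<alpha> * phid \<Gamma> \<alpha> q q1) + p1 \<bullet> q + h * Ham g V \<Gamma> q p1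
    = p1 \<bullet> q1 + (((q1 - q) - Tm \<Gamma> q Dl) \<bullet> ((1/(2*h)) *\<^sub>R (g q *v ((q1 - q) + Tm \<Gamma> q Dl)) - p1 + lamv lam)
       + lamv lam \<bullet> Tm \<Gamma> q (Dk (q - q0))
       + (h/2) * ((gammaM g \<Gamma> q *v ((1/h) *\<^sub>R Dl) - Pm \<Gamma> q p1) \<bullet>
            (matrix_inv (gammaM g \<Gamma> q) *v (gammaM g \<Gamma> q *v ((1/h) *\<^sub>R Dl) - Pm \<Gamma> q p1))))"
proof -
  define y where "y = q1 - q"
  define z where "z = Tm \<Gamma> q Dl"
  define w where "w = Tm \<Gamma> q (Dk (q - q0))"
  define G where "G = g q"
  define M where "M = gammaM g \<Gamma> q"
  define N where "N = matrix_inv M"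
  define P where "P = Pm \<Gamma> q p1"
  define u0 where "u0 = (1/h) *\<^sub>R Dl"
  define r where "r = M *v u0 - P"
  have hne: "h \<noteq> 0" using hpos by simp
  have Gs: "transpose G = G" using gsym[OF qU] G_def by simp
  have h1: "LLd h g V q q1 = (1/(2*h)) * (y \<bullet> (G *v y)) - h * V q"
    by (simp add: LLd_inner y_def G_def)
  have dy: "Dk (q1 - q) = Dl - Dk (q - q0)" by (simp add: Dl_def vec_eq_iff)
  have h2: "(\<Sum>\<alpha>\<in>UNIV. lam \<alpha> * phid \<Gamma> \<alpha> q q1) = lamv lam \<bullet> (y - z + w)"
    by (simp add: phid_sum y_def z_def w_def dy Tm_diff algebra_simps)
  have h3: "Ham g V \<Gamma> q p1 = (1/2) * (P \<bullet> (N *v P)) + V q"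
    by (simp add: Ham_inner P_def N_def M_def)
  have h4: "P \<bullet> (N *v P) = 2 * (P \<bullet> u0) - u0 \<bullet> (M *v u0) + r \<bullet> (N *v r)"
    unfolding r_def
    by (rule quad_inv) (simp_all add: N_def M_def Nsym[OF qU] matrix_inv_props(2)[OF Minv[OF qU]] Msym[OF qU])
  have h5: "P \<bullet> u0 = (1/h) * (p1 \<bullet> z)"
    by (simp add: P_def Pm_Tm u0_def Tm_scale z_def)
  have h6: "u0 \<bullet> (M *v u0) = (1/h) * (1/h) * (z \<bullet> (G *v z))"
    by (simp add: M_def Minner[OF qU] u0_def Tm_scale z_def G_def
        matrix_vector_mult_scaleR)
  have h7: "z \<bullet> (G *v y) = y \<bullet> (G *v z)" using sym_inner[OF Gs] by simp
  have yq: "p1 \<bullet> y = p1 \<bullet> q1 - p1 \<bullet> q" by (simp add: y_def inner_diff_right)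
  have X: "(y - z) \<bullet> ((1/(2*h)) *\<^sub>R (G *v (y + z)) - p1 + lamv lam)
     = (1/(2*h)) * (y \<bullet> (G *v y) - z \<bullet> (G *v z)) - p1 \<bullet> y + p1 \<bullet> z + lamv lam \<bullet> (y - z)"
    by (simp add: algebra_simps inner_diff_left inner_diff_right inner_add_right h7 inner_commute)
  show ?thesis
    unfolding y_def[symmetric] z_def[symmetric] w_def[symmetric] G_def[symmetric] M_def[symmetric]
      N_def[symmetric] P_def[symmetric] u0_def[symmetric] r_def[symmetric]
    unfolding h1 h2 h3 h4 h5 h6 X yq
    using hne
    by (simp add: algebra_simps inner_add_right inner_diff_right)
qed

lemma X_deriv:
  fixes q1 p1 :: "real^('k+'n)" and lam :: "'n \<Rightarrow> real"
  defines "Dl \<equiv> Dk (q1 - q0)"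
  assumes R1: "q1 - q0 = Tm \<Gamma> q0 Dl"
    and R2: "Pm \<Gamma> q0 p1 = (1/h) *\<^sub>R (gammaM g \<Gamma> q0 *v Dl)"
    and R3: "\<And>\<alpha>. lam \<alpha> = p1 $ Inr \<alpha> - (1/h) * (g q0 *v (q1 - q0)) $ Inr \<alpha>"
  shows "((\<lambda>q. (((q1 - q) - Tm \<Gamma> q Dl) \<bullet> ((1/(2*h)) *\<^sub>R (g q *v ((q1 - q) + Tm \<Gamma> q Dl)) - p1 + lamv lam)
       + lamv lam \<bullet> Tm \<Gamma> q (Dk (q - q0))
       + (h/2) * ((gammaM g \<Gamma> q *v ((1/h) *\<^sub>R Dl) - Pm \<Gamma> q p1) \<bullet>
            (matrix_inv (gammaM g \<Gamma> q) *v (gammaM g \<Gamma> q *v ((1/h) *\<^sub>R Dl) - Pm \<Gamma> q p1)))))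
     has_derivative (\<lambda>v. 0)) (at q0)"
proof -
  define Aq where "Aq q = (1/(2*h)) *\<^sub>R (g q *v ((q1 - q) + Tm \<Gamma> q Dl)) - p1 + lamv lam" for q
  define rq where "rq q = gammaM g \<Gamma> q *v ((1/h) *\<^sub>R Dl) - Pm \<Gamma> q p1" for q
  define Nq where "Nq q = matrix_inv (gammaM g \<Gamma> q)" for q
  have hne: "h \<noteq> 0" using hpos by simp
  have dA: "(\<lambda>q. Aq q $ i) differentiable (at q0)" for i
    unfolding Aq_def using hne by (simp add: matrix_vector_mult_def) (auto intro!: derivative_intros)
  have dr: "(\<lambda>q. rq q $ i) differentiable (at q0)" for i
    unfolding rq_def using hne by (simp add: matrix_vector_mult_def Pm_def Pmom_def) (auto intro!: derivative_intros)
  have dNr: "(\<lambda>q. (Nq q *v rq q) $ i) differentiable (at q0)" for i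
    unfolding Nq_def matrix_vector_mult_def by (simp) (auto intro!: derivative_intros dr)
  have r0: "rq q0 = 0" unfolding rq_def R2 by (simp add: matrix_vector_mult_scaleR)
  have Nr0: "(Nq q0 *v rq q0) $ i = 0" for i by (simp add: r0)
  have A0: "Aq q0 = (1/h) *\<^sub>R (g q0 *v (q1 - q0)) - p1 + lamv lam"
  proof -
    have "(q1 - q0) + Tm \<Gamma> q0 Dl = 2 *\<^sub>R (q1 - q0)" using R1 by (simp add: scaleR_2)
    then show ?thesis using hne by (simp add: Aq_def matrix_vector_mult_scaleR)
  qed
  have AInr: "Aq q0 $ Inr \<alpha> = 0" for \<alpha>
    by (simp add: A0 R3)
  have AInl: "Aq q0 $ Inl a = (\<Sum>\<alpha>\<in>UNIV. lam \<alpha> * \<Gamma> q0 \<alpha> a)" for a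
  proof -
    define gd where "gd = g q0 *v (q1 - q0)"
    have "Pm \<Gamma> q0 p1 = (1/h) *\<^sub>R Pm \<Gamma> q0 gd"
      using R2 Mmult[OF q0U, of Dl] R1 by (simp add: gd_def)
    then have "Pm \<Gamma> q0 p1 $ a = (1/h) * Pm \<Gamma> q0 gd $ a" by simp
    then have e: "p1 $ Inl a + (\<Sum>\<alpha>\<in>UNIV. p1 $ Inr \<alpha> * \<Gamma> q0 \<alpha> a) =
       (1/h) * gd $ Inl a + (1/h) * (\<Sum>\<alpha>\<in>UNIV. gd $ Inr \<alpha> * \<Gamma> q0 \<alpha> a)"
      by (simp only: Pm_nth distrib_left)
    have s: "(\<Sum>\<alpha>\<in>UNIV. (p1 $ Inr \<alpha> - (1/h) * gd $ Inr \<alpha>) * \<Gamma> q0 \<alpha> a) =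
        (\<Sum>\<alpha>\<in>UNIV. p1 $ Inr \<alpha> * \<Gamma> q0 \<alpha> a) - (1/h) * (\<Sum>\<alpha>\<in>UNIV. gd $ Inr \<alpha> * \<Gamma> q0 \<alpha> a)"
      by (simp add: left_diff_distrib sum_subtractf sum_distrib_left mult.assoc)
    have "Aq q0 $ Inl a = (1/h) * gd $ Inl a - p1 $ Inl a"
      by (simp add: A0 gd_def)
    also have "\<dots> = (\<Sum>\<alpha>\<in>UNIV. (p1 $ Inr \<alpha> - (1/h) * gd $ Inr \<alpha>) * \<Gamma> q0 \<alpha> a)"
      using e s by linarith
    also have "\<dots> = (\<Sum>\<alpha>\<in>UNIV. lam \<alpha> * \<Gamma> q0 \<alpha> a)" by (simp add: R3 gd_def)
    finally show ?thesis .
  qed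
  define T1 where "T1 q = (\<Sum>a\<in>UNIV. (q0 $ Inl a - q $ Inl a) * Aq q $ Inl a)" for q
  define T2 where "T2 q = (\<Sum>\<alpha>\<in>UNIV. ((q1 - q) - Tm \<Gamma> q Dl) $ Inr \<alpha> * Aq q $ Inr \<alpha>)" for q
  define T3 where "T3 q = (\<Sum>\<alpha>\<in>UNIV. lam \<alpha> * (\<Sum>a\<in>UNIV. (q $ Inl a - q0 $ Inl a) * \<Gamma> q \<alpha> a))" for q
  define T4 where "T4 q = (h/2) * (\<Sum>a\<in>UNIV. rq q $ a * (Nq q *v rq q) $ a)" for q
  have D1: "(T1 has_derivative (\<lambda>v. \<Sum>a\<in>UNIV. (- v $ Inl a) * Aq q0 $ Inl a)) (at q0)"
    unfolding T1_def
    by (intro has_derivative_sum has_derivative_prod0 dA hd_cm) auto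
  have f0: "(\<lambda>q. ((q1 - q) - Tm \<Gamma> q Dl) $ Inr \<alpha>) differentiable (at q0)" for \<alpha>
    by (simp) (auto intro!: derivative_intros)
  have f1: "((q1 - q0) - Tm \<Gamma> q0 Dl) $ Inr \<alpha> = 0" for \<alpha> using R1 by simp
  have D2: "(T2 has_derivative (\<lambda>v. 0)) (at q0)"
  proof -
    have "(T2 has_derivative (\<lambda>v. \<Sum>\<alpha>\<in>(UNIV::'n set). 0)) (at q0)"
      unfolding T2_def
      by (rule has_derivative_sum) (rule has_derivative_prod00[OF f0 dA f1 AInr])
    then show ?thesis by simp
  qed
  have D3: "(T3 has_derivative (\<lambda>v. \<Sum>\<alpha>\<in>UNIV. lam \<alpha> * (\<Sum>a\<in>UNIV. (v $ Inl a) * \<Gamma> q0 \<alpha> a))) (at q0)"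
    unfolding T3_def
    by (intro has_derivative_sum has_derivative_mult_right has_derivative_prod0 dG hd_mc) auto
  have D4: "(T4 has_derivative (\<lambda>v. 0)) (at q0)"
  proof -
    have "(T4 has_derivative (\<lambda>v. (h/2) * (\<Sum>a\<in>(UNIV::'k set). 0))) (at q0)"
      unfolding T4_def
      by (intro has_derivative_sum has_derivative_mult_right has_derivative_prod00 dr dNr Nr0) (simp add: r0)
    then show ?thesis by simp
  qed
  have eq: "(((q1 - q) - Tm \<Gamma> q Dl) \<bullet> ((1/(2*h)) *\<^sub>R (g q *v ((q1 - q) + Tm \<Gamma> q Dl)) - p1 + lamv lam)
       + lamv lam \<bullet> Tm \<Gamma> q (Dk (q - q0))
       + (h/2) * ((gammaM g \<Gamma> q *v ((1/h) *\<^sub>R Dl) - Pm \<Gamma> q p1) \<bullet>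
            (matrix_inv (gammaM g \<Gamma> q) *v (gammaM g \<Gamma> q *v ((1/h) *\<^sub>R Dl) - Pm \<Gamma> q p1))))
      = T1 q + T2 q + T3 q + T4 q" for q
  proof -
    have a: "(q1 - q - Tm \<Gamma> q Dl) \<bullet> Aq q = T1 q + T2 q"
      by (simp add: inner_plus T1_def T2_def Dl_def)
    have b: "lamv lam \<bullet> Tm \<Gamma> q (Dk (q - q0)) = T3 q"
      by (simp add: inner_plus T3_def mult.commute)
    have c: "rq q \<bullet> (Nq q *v rq q) = (\<Sum>a\<in>UNIV. rq q $ a * (Nq q *v rq q) $ a)"
      by (simp add: inner_vec_def)
    show ?thesis using a b c by (simp add: Aq_def rq_def Nq_def T4_def)
  qed
  have hd: "((\<lambda>q. T1 q + T2 q + T3 q + T4 q) has_derivative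
     (\<lambda>v. (\<Sum>a\<in>UNIV. (- v $ Inl a) * Aq q0 $ Inl a) + 0 +
          (\<Sum>\<alpha>\<in>UNIV. lam \<alpha> * (\<Sum>a\<in>UNIV. (v $ Inl a) * \<Gamma> q0 \<alpha> a)) + 0)) (at q0)"
    by (intro has_derivative_add D1 D2 D3 D4)
  have z: "(\<Sum>a\<in>UNIV. (- v $ Inl a) * Aq q0 $ Inl a) + 0 +
          (\<Sum>\<alpha>\<in>UNIV. lam \<alpha> * (\<Sum>a\<in>UNIV. (v $ Inl a) * \<Gamma> q0 \<alpha> a)) + 0 = 0" for v
    by (simp add: AInl sum_distrib_left sum_distrib_right algebra_simps sum_negf)
       (subst sum.swap, simp add: algebra_simps)
  have F: "(\<lambda>v. (\<Sum>a\<in>UNIV. (- v $ Inl a) * Aq q0 $ Inl a) + 0 +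
          (\<Sum>\<alpha>\<in>UNIV. lam \<alpha> * (\<Sum>a\<in>UNIV. (v $ Inl a) * \<Gamma> q0 \<alpha> a)) + 0) = (\<lambda>v. 0)" by (rule ext) (rule z)
  show ?thesis unfolding eq using hd unfolding F .
qed

end

lemma grad_inner:
  assumes "(f has_derivative (\<lambda>v. w \<bullet> v)) (at x)"
  shows "grad f x = w"
  using grad_eq[OF assms] by (simp add: vec_eq_iff cart_eq_inner_axis[symmetric])

lemma vec_eq_plus:
  fixes x y :: "real^('k::finite+'n::finite)"
  shows "x = y \<longleftrightarrow> (\<forall>a. x$Inl a = y$Inl a) \<and> (\<forall>b. x$Inr b = y$Inr b)"
  by (metis vec_eq_iff old.sum.exhaust)

lemma hd_lin_shift: "((\<lambda>q. G *v (q - c)) has_derivative (\<lambda>v. (G::real^'n^'m) *v v)) F"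
proof -
  have "((\<lambda>q. q - c) has_derivative (\<lambda>v. v - 0)) F" by (intro derivative_intros)
  then have "((\<lambda>q. q - c) has_derivative (\<lambda>v. v)) F" by simp
  then show ?thesis by (rule bounded_linear.has_derivative[OF matrix_vector_mul_bounded_linear])
qed

lemma Pm_linear: "bounded_linear (Pm \<Gamma> q)"
proof -
  have "linear (Pm \<Gamma> q)"
    by (rule linearI) (simp_all add: vec_eq_iff algebra_simps sum.distrib sum_distrib_left)
  then show ?thesis by (simp add: linear_conv_bounded_linear)
qed

lemma sum_ind: "(\<Sum>x\<in>(UNIV::'a::finite set). (f x::real) * (if x = b then 1 else 0)) = f b"
proof -
  have "(\<Sum>x\<in>(UNIV::'a set). f x * (if x = b then 1 else 0)) = (\<Sum>x\<in>UNIV. if x = b then f x else 0)"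
    by (rule sum.cong) auto
  then show ?thesis by simp
qed

context mset begin

lemma d1_LLd: "d1 (LLd h g V) q0 q1 = (1/h) *\<^sub>R (g q0 *v (q1 - q0))"
proof -
  have hne: "h \<noteq> 0" using hpos by simp
  have e: "(\<lambda>q. LLd h g V q0 q) = (\<lambda>q. (1/(2*h)) * ((q - q0) \<bullet> (g q0 *v (q - q0))) - h * V q0)"
    by (simp add: LLd_inner)
  have "((\<lambda>q. (1/(2*h)) * ((q - q0) \<bullet> (g q0 *v (q - q0))) - h * V q0) has_derivative
      (\<lambda>v. (1/(2*h)) * ((q1 - q0) \<bullet> (g q0 *v v) + v \<bullet> (g q0 *v (q1 - q0))) - 0)) (at q1)"
    by (intro has_derivative_diff has_derivative_mult_right has_derivative_inner hd_lin_shift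
        has_derivative_const) (rule hd_lin_shift[of "mat 1", simplified])
  moreover have "(\<lambda>v. (1/(2*h)) * ((q1 - q0) \<bullet> (g q0 *v v) + v \<bullet> (g q0 *v (q1 - q0))) - 0)
      = (\<lambda>v. ((1/h) *\<^sub>R (g q0 *v (q1 - q0))) \<bullet> v)"
    using sym_inner[OF gsym[OF q0U]] hne by (auto simp: inner_commute field_simps)
  ultimately show ?thesis unfolding d1_def e by (simp add: grad_inner)
qed

lemma d1_phid_hd: "((\<lambda>q. phid \<Gamma> \<alpha> q0 q) has_derivative
    (\<lambda>v. v $ Inr \<alpha> - (\<Sum>a\<in>UNIV. \<Gamma> q0 \<alpha> a * v $ Inl a))) (at q1)"
proof -
  have "((\<lambda>q. phid \<Gamma> \<alpha> q0 q) has_derivative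
    (\<lambda>v. v $ Inr \<alpha> - 0 - (\<Sum>a\<in>UNIV. \<Gamma> q0 \<alpha> a * (v $ Inl a - 0)))) (at q1)"
    unfolding phid_def by (intro derivative_intros)
  then show ?thesis by simp
qed

lemma d1_comb_Inl:
  "(d1 (LLd h g V) q0 q1 + (\<Sum>\<alpha>\<in>UNIV. lam \<alpha> *\<^sub>R d1 (phid \<Gamma> \<alpha>) q0 q1)) $ Inl a
    = (1/h) * (g q0 *v (q1 - q0)) $ Inl a - (\<Sum>\<alpha>\<in>UNIV. lam \<alpha> * \<Gamma> q0 \<alpha> a)"
  unfolding d1_LLd
  by (simp add: d1_def grad_eq[OF d1_phid_hd] axis_def sum_component if_distrib sum.If_cases sum_negf)

lemma d1_comb_Inr:
  "(d1 (LLd h g V) q0 q1 + (\<Sum>\<alpha>\<in>UNIV. lam \<alpha> *\<^sub>R d1 (phid \<Gamma> \<alpha>) q0 q1)) $ Inr b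
    = (1/h) * (g q0 *v (q1 - q0)) $ Inr b + lam b"
  unfolding d1_LLd
  by (simp add: d1_def grad_eq[OF d1_phid_hd] axis_def sum_component sum_ind)

lemma grad_p_Ham: "grad (\<lambda>p. Ham g V \<Gamma> q0 p) p1 =
   Tm \<Gamma> q0 (matrix_inv (gammaM g \<Gamma> q0) *v Pm \<Gamma> q0 p1)"
proof -
  define N where "N = matrix_inv (gammaM g \<Gamma> q0)"
  have Ns: "transpose N = N" using Nsym[OF q0U] N_def by simp
  have hP: "(Pm \<Gamma> q0 has_derivative Pm \<Gamma> q0) F" for F
    by (rule bounded_linear_imp_has_derivative[OF Pm_linear])
  have hNP: "((\<lambda>p. N *v Pm \<Gamma> q0 p) has_derivative (\<lambda>v. N *v Pm \<Gamma> q0 v)) F" for F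
    by (rule bounded_linear.has_derivative[OF matrix_vector_mul_bounded_linear hP])
  have "((\<lambda>p. (1/2) * (Pm \<Gamma> q0 p \<bullet> (N *v Pm \<Gamma> q0 p)) + V q0) has_derivative
     (\<lambda>v. (1/2) * (Pm \<Gamma> q0 p1 \<bullet> (N *v Pm \<Gamma> q0 v) + Pm \<Gamma> q0 v \<bullet> (N *v Pm \<Gamma> q0 p1)) + 0)) (at p1)"
    by (intro has_derivative_add has_derivative_mult_right has_derivative_inner hP hNP has_derivative_const)
  moreover have "(\<lambda>v. (1/2) * (Pm \<Gamma> q0 p1 \<bullet> (N *v Pm \<Gamma> q0 v) + Pm \<Gamma> q0 v \<bullet> (N *v Pm \<Gamma> q0 p1)) + 0)
      = (\<lambda>v. Tm \<Gamma> q0 (N *v Pm \<Gamma> q0 p1) \<bullet> v)"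
    using sym_inner[OF Ns] by (auto simp: Pm_Tm inner_commute)
  ultimately show ?thesis unfolding Ham_inner N_def[symmetric] by (simp add: grad_inner)
qed

lemma grad_identity:
  fixes q1 p1 :: "real^('k+'n)" and lam :: "'n \<Rightarrow> real"
  assumes R1: "q1 - q0 = Tm \<Gamma> q0 (Dk (q1 - q0))"
    and R2: "Pm \<Gamma> q0 p1 = (1/h) *\<^sub>R (gammaM g \<Gamma> q0 *v Dk (q1 - q0))"
    and R3: "\<And>\<alpha>. lam \<alpha> = p1 $ Inr \<alpha> - (1/h) * (g q0 *v (q1 - q0)) $ Inr \<alpha>"
  shows "d0 (LLd h g V) q0 q1 + (\<Sum>\<alpha>\<in>UNIV. lam \<alpha> *\<^sub>R d0 (phid \<Gamma> \<alpha>) q0 q1) + p1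
          + h *\<^sub>R grad (\<lambda>q. Ham g V \<Gamma> q p1) q0 = 0"
proof -
  define FL where "FL = frechet_derivative (\<lambda>q. LLd h g V q q1) (at q0)"
  define FP where "FP \<alpha> = frechet_derivative (\<lambda>q. phid \<Gamma> \<alpha> q q1) (at q0)" for \<alpha>
  define FH where "FH = frechet_derivative (\<lambda>q. Ham g V \<Gamma> q p1) (at q0)"
  have hL: "((\<lambda>q. LLd h g V q q1) has_derivative FL) (at q0)"
    unfolding FL_def using dLLd frechet_derivative_works by blast
  have hP: "((\<lambda>q. phid \<Gamma> \<alpha> q q1) has_derivative FP \<alpha>) (at q0)" for \<alpha>
    unfolding FP_def using dphid frechet_derivative_works by blast
  have hH: "((\<lambda>q. Ham g V \<Gamma> q p1) has_derivative FH) (at q0)"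
    unfolding FH_def using dHam frechet_derivative_works by blast
  have hp1: "((\<lambda>q. p1 \<bullet> q) has_derivative (\<lambda>v. p1 \<bullet> v)) (at q0)"
    by (rule bounded_linear_imp_has_derivative[OF bounded_linear_inner_right])
  define S where "S q = LLd h g V q q1 + (\<Sum>\<alpha>\<in>UNIV. lam \<alpha> * phid \<Gamma> \<alpha> q q1) + p1 \<bullet> q + h * Ham g V \<Gamma> q p1" for q
  have hS: "(S has_derivative (\<lambda>v. FL v + (\<Sum>\<alpha>\<in>UNIV. lam \<alpha> * FP \<alpha> v) + p1 \<bullet> v + h * FH v)) (at q0)"
    unfolding S_def
    by (intro has_derivative_add has_derivative_sum has_derivative_mult_right hL hP hH hp1)
  have hX: "((\<lambda>q. p1 \<bullet> q1 + (((q1 - q) - Tm \<Gamma> q (Dk (q1 - q0))) \<bullet> ((1/(2*h)) *\<^sub>R (g q *v ((q1 - q) + Tm \<Gamma> q (Dk (q1 - q0)))) - p1 + lamv lam)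
       + lamv lam \<bullet> Tm \<Gamma> q (Dk (q - q0))
       + (h/2) * ((gammaM g \<Gamma> q *v ((1/h) *\<^sub>R Dk (q1 - q0)) - Pm \<Gamma> q p1) \<bullet>
            (matrix_inv (gammaM g \<Gamma> q) *v (gammaM g \<Gamma> q *v ((1/h) *\<^sub>R Dk (q1 - q0)) - Pm \<Gamma> q p1)))))
     has_derivative (\<lambda>v. 0 + 0)) (at q0)"
    by (intro has_derivative_add has_derivative_const X_deriv[OF R1 R2 R3])
  have hS0: "(S has_derivative (\<lambda>v. 0)) (at q0)"
    using has_derivative_transform_within_open[OF hX oU q0U] S_identity unfolding S_def by simp
  have F: "(\<lambda>v. FL v + (\<Sum>\<alpha>\<in>UNIV. lam \<alpha> * FP \<alpha> v) + p1 \<bullet> v + h * FH v) = (\<lambda>v. 0)"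
    using has_derivative_unique[OF hS hS0] .
  show ?thesis
  proof (subst vec_eq_iff, intro allI)
    fix i
    have "FL (axis i 1) + (\<Sum>\<alpha>\<in>UNIV. lam \<alpha> * FP \<alpha> (axis i 1)) + p1 \<bullet> axis i 1 + h * FH (axis i 1) = 0"
      using fun_cong[OF F, of "axis i 1"] by simp
    then show "(d0 (LLd h g V) q0 q1 + (\<Sum>\<alpha>\<in>UNIV. lam \<alpha> *\<^sub>R d0 (phid \<Gamma> \<alpha>) q0 q1) + p1
          + h *\<^sub>R grad (\<lambda>q. Ham g V \<Gamma> q p1) q0) $ i = 0 $ i"
      by (simp add: d0_def grad_def FL_def FP_def FH_def sum_component inner_axis)
  qed
qed

lemma R2_comp:
  assumes R1: "q1 - q0 = Tm \<Gamma> q0 (Dk (q1 - q0))"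
  shows "Pm \<Gamma> q0 p = (1/h) *\<^sub>R (gammaM g \<Gamma> q0 *v Dk (q1 - q0)) \<longleftrightarrow>
    (\<forall>a. p $ Inl a + (\<Sum>\<alpha>\<in>UNIV. p $ Inr \<alpha> * \<Gamma> q0 \<alpha> a) =
       (1/h) * (g q0 *v (q1 - q0)) $ Inl a + (1/h) * (\<Sum>\<alpha>\<in>UNIV. (g q0 *v (q1 - q0)) $ Inr \<alpha> * \<Gamma> q0 \<alpha> a))"
proof -
  have "gammaM g \<Gamma> q0 *v Dk (q1 - q0) = Pm \<Gamma> q0 (g q0 *v (q1 - q0))"
    using Mmult[OF q0U, of "Dk (q1 - q0)"] R1 by simp
  note eq = this
  show ?thesis unfolding eq by (simp add: vec_eq_iff distrib_left)
qed

end

lemma abc_eq: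
  assumes "(a::'a::ab_group_add) + b + c = 0" shows "b = - a - c"
proof -
  have "b = (a + b + c) - a - c" by (simp add: algebra_simps)
  then show ?thesis using assms by simp
qed

theorem mainTheorem4:
  fixes U :: "(real^('k::finite + 'n::finite)) set"
    and g :: "real^('k + 'n) \<Rightarrow> real^('k + 'n)^('k + 'n)"
    and V :: "real^('k + 'n) \<Rightarrow> real"
    and \<Gamma> :: "real^('k + 'n) \<Rightarrow> 'n \<Rightarrow> 'k \<Rightarrow> real"
    and h :: real
  assumes "open U"
    and "riemannian_metric U g"
    and "smooth_on U V"
    and "\<And>\<alpha> a. smooth_on U (\<lambda>q. \<Gamma> q \<alpha> a)"
    and "h > 0"
  shows "Upsilon ` SigmaLd U h g V \<Gamma> =
    {(q0, p0, q1, p1). q0 \<in> U \<and> q1 \<in> U \<and>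
       p1 = p0 - h *\<^sub>R grad (\<lambda>q. Ham g V \<Gamma> q p1) q0 \<and>
       q1 = q0 + h *\<^sub>R grad (\<lambda>p. Ham g V \<Gamma> q0 p) p1}"
proof (intro set_eqI iffI)
  have hne: "h \<noteq> 0" using assms(5) by simp
  fix x
  {
    assume "x \<in> Upsilon ` SigmaLd U h g V \<Gamma>"
    then obtain y where y: "y \<in> SigmaLd U h g V \<Gamma>" and xy: "x = Upsilon y" by blast
    obtain q0 q1 \<mu>0 \<mu>1 where yy: "y = ((q0, q1), (\<mu>0, \<mu>1))" by (metis prod.collapse)
    have "(q0, q1) \<in> Cd U \<Gamma> \<and> (\<exists>lam :: 'n \<Rightarrow> real.
        \<mu>0 = d0 (LLd h g V) q0 q1 + (\<Sum>\<alpha>\<in>UNIV. lam \<alpha> *\<^sub>R d0 (phid \<Gamma> \<alpha>) q0 q1) \<and>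
        \<mu>1 = d1 (LLd h g V) q0 q1 + (\<Sum>\<alpha>\<in>UNIV. lam \<alpha> *\<^sub>R d1 (phid \<Gamma> \<alpha>) q0 q1))"
      using y unfolding yy SigmaLd_def by simp
    then obtain lam where x: "x = (q0, -\<mu>0, q1, \<mu>1)" and C: "(q0,q1) \<in> Cd U \<Gamma>"
      and m0: "\<mu>0 = d0 (LLd h g V) q0 q1 + (\<Sum>\<alpha>\<in>UNIV. lam \<alpha> *\<^sub>R d0 (phid \<Gamma> \<alpha>) q0 q1)"
      and m1: "\<mu>1 = d1 (LLd h g V) q0 q1 + (\<Sum>\<alpha>\<in>UNIV. lam \<alpha> *\<^sub>R d1 (phid \<Gamma> \<alpha>) q0 q1)"
      using xy yy by (auto simp: Upsilon_def)
    from C have q0U: "q0 \<in> U" and q1U: "q1 \<in> U" and ph: "\<And>\<alpha>. phid \<Gamma> \<alpha> q0 q1 = 0"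
      by (auto simp: Cd_def)
    interpret m: mset U g V \<Gamma> h q0 using assms q0U by unfold_locales auto
    define gd where "gd = g q0 *v (q1 - q0)"
    have R1: "q1 - q0 = Tm \<Gamma> q0 (Dk (q1 - q0))"
      using ph by (auto simp: vec_eq_plus phid_def)
    have mInr: "\<mu>1 $ Inr b = (1/h) * gd $ Inr b + lam b" for b
      using m.d1_comb_Inr[of q1 lam b] m1 gd_def by simp
    have mInl: "\<mu>1 $ Inl a = (1/h) * gd $ Inl a - (\<Sum>\<alpha>\<in>UNIV. lam \<alpha> * \<Gamma> q0 \<alpha> a)" for a
      using m.d1_comb_Inl[of q1 lam a] m1 gd_def by simp
    have R3: "\<And>\<alpha>. lam \<alpha> = \<mu>1 $ Inr \<alpha> - (1/h) * (g q0 *v (q1 - q0)) $ Inr \<alpha>"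
      using mInr gd_def by simp
    have R2: "Pm \<Gamma> q0 \<mu>1 = (1/h) *\<^sub>R (gammaM g \<Gamma> q0 *v Dk (q1 - q0))"
      unfolding m.R2_comp[OF R1] gd_def[symmetric]
      by (simp add: mInl mInr distrib_right sum.distrib sum_distrib_left mult.assoc)
    have GI: "d0 (LLd h g V) q0 q1 + (\<Sum>\<alpha>\<in>UNIV. lam \<alpha> *\<^sub>R d0 (phid \<Gamma> \<alpha>) q0 q1) + \<mu>1
          + h *\<^sub>R grad (\<lambda>q. Ham g V \<Gamma> q \<mu>1) q0 = 0"
      by (rule m.grad_identity[OF R1 R2 R3])
    have e1: "\<mu>1 = - \<mu>0 - h *\<^sub>R grad (\<lambda>q. Ham g V \<Gamma> q \<mu>1) q0"
      by (rule abc_eq) (use GI m0 in simp)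
    have NM: "matrix_inv (gammaM g \<Gamma> q0) *v (gammaM g \<Gamma> q0 *v y) = y" for y
      by (simp add: matrix_vector_mul_assoc matrix_inv_props(2)[OF m.Minv[OF q0U]])
    have e2: "q1 = q0 + h *\<^sub>R grad (\<lambda>p. Ham g V \<Gamma> q0 p) \<mu>1"
      using hne R1 by (simp add: m.grad_p_Ham R2 matrix_vector_mult_scaleR NM Tm_scale)
    show "x \<in> {(q0, p0, q1, p1). q0 \<in> U \<and> q1 \<in> U \<and>
       p1 = p0 - h *\<^sub>R grad (\<lambda>q. Ham g V \<Gamma> q p1) q0 \<and>
       q1 = q0 + h *\<^sub>R grad (\<lambda>p. Ham g V \<Gamma> q0 p) p1}"
      using x q0U q1U e1 e2 by simp
  }
  {
    assume "x \<in> {(q0, p0, q1, p1). q0 \<in> U \<and> q1 \<in> U \<and>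
       p1 = p0 - h *\<^sub>R grad (\<lambda>q. Ham g V \<Gamma> q p1) q0 \<and>
       q1 = q0 + h *\<^sub>R grad (\<lambda>p. Ham g V \<Gamma> q0 p) p1}"
    note hx = this
    obtain q0 p0 q1 p1 where x: "x = (q0, p0, q1, p1)" by (metis prod.collapse)
    have "q0 \<in> U \<and> q1 \<in> U \<and>
       p1 = p0 - h *\<^sub>R grad (\<lambda>q. Ham g V \<Gamma> q p1) q0 \<and>
       q1 = q0 + h *\<^sub>R grad (\<lambda>p. Ham g V \<Gamma> q0 p) p1" using hx unfolding x mem_Collect_eq prod.case .
    then have q0U: "q0 \<in> U" and q1U: "q1 \<in> U"
      and e1: "p1 = p0 - h *\<^sub>R grad (\<lambda>q. Ham g V \<Gamma> q p1) q0"
      and e2: "q1 = q0 + h *\<^sub>R grad (\<lambda>p. Ham g V \<Gamma> q0 p) p1"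
      by blast+
    interpret m: mset U g V \<Gamma> h q0 using assms q0U by unfold_locales auto
    define gd where "gd = g q0 *v (q1 - q0)"
    define u where "u = matrix_inv (gammaM g \<Gamma> q0) *v Pm \<Gamma> q0 p1"
    have d: "q1 - q0 = Tm \<Gamma> q0 (h *\<^sub>R u)"
      using e2 by (simp add: m.grad_p_Ham u_def Tm_scale)
    then have Dku: "Dk (q1 - q0) = h *\<^sub>R u" by simp
    have R1: "q1 - q0 = Tm \<Gamma> q0 (Dk (q1 - q0))" using d Dku by simp
    have MN: "gammaM g \<Gamma> q0 *v u = Pm \<Gamma> q0 p1"
      by (simp add: u_def matrix_vector_mul_assoc matrix_inv_props(1)[OF m.Minv[OF q0U]])
    have R2: "Pm \<Gamma> q0 p1 = (1/h) *\<^sub>R (gammaM g \<Gamma> q0 *v Dk (q1 - q0))"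
      using hne by (simp add: Dku matrix_vector_mult_scaleR MN)
    define lam where "lam \<alpha> = p1 $ Inr \<alpha> - (1/h) * (g q0 *v (q1 - q0)) $ Inr \<alpha>" for \<alpha>
    have R3: "\<And>\<alpha>. lam \<alpha> = p1 $ Inr \<alpha> - (1/h) * (g q0 *v (q1 - q0)) $ Inr \<alpha>" by (simp add: lam_def)
    have GI: "d0 (LLd h g V) q0 q1 + (\<Sum>\<alpha>\<in>UNIV. lam \<alpha> *\<^sub>R d0 (phid \<Gamma> \<alpha>) q0 q1) + p1
          + h *\<^sub>R grad (\<lambda>q. Ham g V \<Gamma> q p1) q0 = 0"
      by (rule m.grad_identity[OF R1 R2 R3])
    have m0: "- p0 = d0 (LLd h g V) q0 q1 + (\<Sum>\<alpha>\<in>UNIV. lam \<alpha> *\<^sub>R d0 (phid \<Gamma> \<alpha>) q0 q1)"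
    proof -
      let ?A = "d0 (LLd h g V) q0 q1 + (\<Sum>\<alpha>\<in>UNIV. lam \<alpha> *\<^sub>R d0 (phid \<Gamma> \<alpha>) q0 q1)"
      let ?G = "h *\<^sub>R grad (\<lambda>q. Ham g V \<Gamma> q p1) q0"
      have p1e: "p1 = - ?A - ?G" by (rule abc_eq[OF GI])
      have "p0 = p1 + ?G" using e1 by (metis diff_add_cancel)
      moreover have "p1 + ?G = (- ?A - ?G) + ?G" by (rule arg_cong[OF p1e, of "\<lambda>z. z + ?G"])
      ultimately have "p0 = - ?A" by (simp only: diff_add_cancel)
      then show ?thesis by (simp only: minus_minus)
    qed
    have comp: "p1 $ Inl a + (\<Sum>\<alpha>\<in>UNIV. p1 $ Inr \<alpha> * \<Gamma> q0 \<alpha> a) =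
       (1/h) * gd $ Inl a + (1/h) * (\<Sum>\<alpha>\<in>UNIV. gd $ Inr \<alpha> * \<Gamma> q0 \<alpha> a)" for a
      using R2 unfolding m.R2_comp[OF R1] gd_def by blast
    have m1: "p1 = d1 (LLd h g V) q0 q1 + (\<Sum>\<alpha>\<in>UNIV. lam \<alpha> *\<^sub>R d1 (phid \<Gamma> \<alpha>) q0 q1)"
    proof (subst vec_eq_plus, intro conjI allI)
      fix a
      have s: "(\<Sum>\<alpha>\<in>UNIV. lam \<alpha> * \<Gamma> q0 \<alpha> a) =
        (\<Sum>\<alpha>\<in>UNIV. p1 $ Inr \<alpha> * \<Gamma> q0 \<alpha> a) - (1/h) * (\<Sum>\<alpha>\<in>UNIV. gd $ Inr \<alpha> * \<Gamma> q0 \<alpha> a)"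
        by (simp add: lam_def gd_def[symmetric] left_diff_distrib sum_subtractf sum_distrib_left mult.assoc)
      show "p1 $ Inl a = (d1 (LLd h g V) q0 q1 + (\<Sum>\<alpha>\<in>UNIV. lam \<alpha> *\<^sub>R d1 (phid \<Gamma> \<alpha>) q0 q1)) $ Inl a"
        unfolding m.d1_comb_Inl gd_def[symmetric] using comp[of a] s by linarith
    next
      fix b
      show "p1 $ Inr b = (d1 (LLd h g V) q0 q1 + (\<Sum>\<alpha>\<in>UNIV. lam \<alpha> *\<^sub>R d1 (phid \<Gamma> \<alpha>) q0 q1)) $ Inr b"
        unfolding m.d1_comb_Inr by (simp add: lam_def)
    qed
    have C: "(q0, q1) \<in> Cd U \<Gamma>"
    proof -
      have "phid \<Gamma> \<alpha> q0 q1 = 0" for \<alpha>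
        using arg_cong[OF R1, of "\<lambda>v. v $ Inr \<alpha>"] by (simp add: phid_def)
      then show ?thesis using q0U q1U by (simp add: Cd_def)
    qed
    have ex: "\<exists>lam :: 'n \<Rightarrow> real.
        - p0 = d0 (LLd h g V) q0 q1 + (\<Sum>\<alpha>\<in>UNIV. lam \<alpha> *\<^sub>R d0 (phid \<Gamma> \<alpha>) q0 q1) \<and>
        p1 = d1 (LLd h g V) q0 q1 + (\<Sum>\<alpha>\<in>UNIV. lam \<alpha> *\<^sub>R d1 (phid \<Gamma> \<alpha>) q0 q1)"
      by (intro exI[of _ lam] conjI m0 m1)
    have mem: "((q0, q1), (-p0, p1)) \<in> SigmaLd U h g V \<Gamma>"
      unfolding SigmaLd_def using C ex by simp
    have xeq: "x = Upsilon ((q0, q1), (-p0, p1))" by (simp add: x Upsilon_def)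
    show "x \<in> Upsilon ` SigmaLd U h g V \<Gamma>" by (rule image_eqI[where f=Upsilon, OF xeq mem])
  }
qed

end
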